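(* For all positive integers $m\le k$ there exists a Boolean function $g:\{0,1\}^n\to\{0,1\}$ (for some $n$) with $s_0(g)=m$, $bs_0(g)=k$ and \[ C_1(g)=\left\lfloor \frac{3\lceil k/m\rceil}{2}\right\rfloor+1. \]
   Context: For $x\in\{0,1\}^n$ and $S\subseteq[n]$, $x^S$ denotes $x$ with all bits in $S$ flipped. $s(g,x)$ is the number of $i$ with $g(x)\neq g(x^{\{i\}})$ and $s_0(g)=\max\{s(g,x): g(x)=0\}$. $bs(g,x)$ is the maximum number of pairwise disjoint sets $B_1,\dots,B_b\subseteq[n]$ with $g(x^{B_j})\neq g(x)$ for all $j$, and $bs_0(g)=\max\{bs(g,x): g(x)=0\}$. A 1-certificate is a partial assignment $c:S\to\{0,1\}$ such that $g$ equals 1 on every input agreeing with $c$ on $S$; $C(g,x)$ is the minimum $|S|$ over certificates (partial assignments on which $g$ is constant) agreeing with $x$, and $C_1(g)=\max\{C(g,x): g(x)=1\}$. *)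

theory Defs
  imports Complex_Main
begin

text \<open>Inputs in {0,1}^n are modelled as bool lists of length n (True = 1),
  a Boolean function on n variables as g :: bool list => bool together with n.\<close>

definition flip :: "nat set \<Rightarrow> bool list \<Rightarrow> bool list" where
  "flip S x = map (\<lambda>i. if i \<in> S then \<not> x ! i else x ! i) [0..<length x]"

definition sens :: "(bool list \<Rightarrow> bool) \<Rightarrow> bool list \<Rightarrow> nat" where
  "sens g x = card {i. i < length x \<and> g (flip {i} x) \<noteq> g x}"

definition s0 :: "nat \<Rightarrow> (bool list \<Rightarrow> bool) \<Rightarrow> nat" where
  "s0 n g = Sup {sens g x | x. length x = n \<and> \<not> g x}"

definition bsens :: "(bool list \<Rightarrow> bool) \<Rightarrow> bool list \<Rightarrow> nat" where
  "bsens g x = Sup {b. \<exists>B :: nat \<Rightarrow> nat set.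
      (\<forall>j<b. B j \<subseteq> {..<length x} \<and> g (flip (B j) x) \<noteq> g x) \<and>
      (\<forall>i<b. \<forall>j<b. i \<noteq> j \<longrightarrow> B i \<inter> B j = {})}"

definition bs0 :: "nat \<Rightarrow> (bool list \<Rightarrow> bool) \<Rightarrow> nat" where
  "bs0 n g = Sup {bsens g x | x. length x = n \<and> \<not> g x}"

definition is_cert :: "(bool list \<Rightarrow> bool) \<Rightarrow> bool list \<Rightarrow> nat set \<Rightarrow> bool" where
  "is_cert g x S \<longleftrightarrow> S \<subseteq> {..<length x} \<and>
     (\<forall>y. length y = length x \<and> (\<forall>i\<in>S. y ! i = x ! i) \<longrightarrow> g y = g x)"

definition cert :: "(bool list \<Rightarrow> bool) \<Rightarrow> bool list \<Rightarrow> nat" where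
  "cert g x = Inf {card S | S. is_cert g x S}"

definition C1 :: "nat \<Rightarrow> (bool list \<Rightarrow> bool) \<Rightarrow> nat" where
  "C1 n g = Sup {cert g x | x. length x = n \<and> g x}"

end

theory Submission
  imports Defs
begin

lemma length_flip[simp]: "length (flip S x) = length x"
  by (simp add: flip_def)

lemma nth_flip[simp]: "i < length x \<Longrightarrow> flip S x ! i = (if i \<in> S then \<not> x ! i else x ! i)"
  by (simp add: flip_def)

lemma modtour_half: fixes r r' B :: nat assumes "r < r'" "r' < B"
  shows "(r + B - r') mod B \<in> {1..B div 2} \<or> (r' + B - r) mod B \<in> {1..B div 2}"
proof -
  have e1: "r + B - r' = B - (r' - r)" using assms by arith
  have l1: "B - (r' - r) < B" using assms by arith
  have a: "(r + B - r') mod B = B - (r' - r)" unfolding e1 using l1 by (rule mod_less)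
  have e2: "r' + B - r = (r' - r) + B" using assms by arith
  have b1: "(r' - r + B) mod B = (r' - r) mod B" by (rule mod_add_self2)
  have b2: "(r' - r) mod B = r' - r" using assms by (intro mod_less) arith
  have b: "(r' + B - r) mod B = r' - r" unfolding e2 b1 b2 ..
  have h: "B \<le> 2 * (B div 2) + 1" by simp
  show ?thesis unfolding a b using assms h by auto
qed

lemma modtour: fixes r r' B :: nat assumes "r < B" "r' < B" "r \<noteq> r'"
  shows "(r + B - r') mod B \<in> {1..B div 2} \<or> (r' + B - r) mod B \<in> {1..B div 2}"
proof (cases "r < r'")
  case True thus ?thesis using modtour_half[OF True assms(2)] by blast
next
  case False
  hence "r' < r" using assms by simp
  thus ?thesis using modtour_half[OF _ assms(1), of r'] by blast
qed

locale cons =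
  fixes m c e :: nat
  assumes m0: "0 < m" and c0: "0 < c" and e1: "0 < e" and em: "e \<le> m" and ce: "1 < c \<or> e = m"
begin

definition b :: "nat \<Rightarrow> nat" where "b g = (if g < e then c else c - 1)"
definition pv :: "nat \<Rightarrow> nat \<Rightarrow> nat" where "pv g r = 2 * (g * c + r)"
definition Ps :: "nat \<Rightarrow> nat \<Rightarrow> nat set" where "Ps g r = {pv g r, Suc (pv g r)}"
definition Zs :: "nat \<Rightarrow> nat \<Rightarrow> nat set" where
  "Zs g r = {pv g r' | r'. r' < b g \<and> r' \<noteq> r} \<union>
            {Suc (pv g r') | r'. r' < b g \<and> r' \<noteq> r \<and> (r' + b g - r) mod b g \<in> {1..b g div 2}}"
definition Idx :: "(nat \<times> nat) set" where "Idx = {(g, r). g < m \<and> r < b g}"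
definition inQ :: "bool list \<Rightarrow> nat \<times> nat \<Rightarrow> bool" where
  "inQ x t = ((\<forall>i\<in>Ps (fst t) (snd t). x ! i) \<and> (\<forall>i\<in>Zs (fst t) (snd t). \<not> x ! i))"
definition G :: "bool list \<Rightarrow> bool" where "G x = (\<exists>t\<in>Idx. inQ x t)"
definition n :: nat where "n = 2 * m * c"

lemma b_le: "b g \<le> c" by (simp add: b_def)
lemma b_pos: "g < m \<Longrightarrow> 0 < b g" using ce c0 by (auto simp: b_def)

lemma pv_inj: "r < c \<Longrightarrow> r' < c \<Longrightarrow> pv g r = pv g' r' \<longleftrightarrow> g = g' \<and> r = r'"
proof
  assume r: "r < c" "r' < c" and h: "pv g r = pv g' r'"
  hence h2: "g * c + r = g' * c + r'" by (simp add: pv_def)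
  have "(g * c + r) div c = g" "(g' * c + r') div c = g'" using r c0 by auto
  hence "g = g'" using h2 by simp
  thus "g = g' \<and> r = r'" using h2 by simp
qed simp

lemma pv_Suc_ne: "pv g r \<noteq> Suc (pv g' r')"
proof -
  have "even (pv g r)" "even (pv g' r')" by (simp_all add: pv_def)
  thus ?thesis by auto
qed

lemma coords_lt: assumes "(g, r) \<in> Idx" "i \<in> Ps g r \<union> Zs g r" shows "i < n"
proof -
  have *: "\<And>r'. r' < b g \<Longrightarrow> Suc (pv g r') < n"
  proof -
    fix r' assume "r' < b g"
    hence "r' < c" using b_le[of g] by simp
    moreover have "g < m" using assms by (simp add: Idx_def)
    ultimately have "g * c + r' < m * c"
    proof -
      have "g * c + r' < g * c + c" using \<open>r' < c\<close> by simp
      also have "\<dots> = Suc g * c" by simp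
      also have "\<dots> \<le> m * c" using \<open>g < m\<close> by (intro mult_le_mono1) simp
      finally show ?thesis .
    qed
    thus "Suc (pv g r') < n" by (simp add: pv_def n_def)
  qed
  have "r < b g" using assms by (simp add: Idx_def)
  thus ?thesis using assms(2) *[of r] * by (auto simp: Ps_def Zs_def dest: Suc_lessD)
qed

lemma PZ_disj: "(g, r) \<in> Idx \<Longrightarrow> Ps g r \<inter> Zs g r = {}"
proof -
  assume "(g, r) \<in> Idx"
  hence r: "r < c" using b_le[of g] by (simp add: Idx_def)
  have ne: "pv g r \<noteq> pv g r'" if "r' < b g" "r' \<noteq> r" for r'
    using that r b_le[of g] pv_inj[of r r' g g] by auto
  have "x \<notin> Zs g r" if x: "x \<in> Ps g r" for x
  proof
    assume "x \<in> Zs g r"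
    then obtain r' where r': "r' < b g" "r' \<noteq> r" "x = pv g r' \<or> x = Suc (pv g r')"
      unfolding Zs_def by blast
    from x have "x = pv g r \<or> x = Suc (pv g r)" by (simp add: Ps_def)
    thus False using r' ne[OF r'(1,2)] pv_Suc_ne[of g r g r'] pv_Suc_ne[of g r' g r] by auto
  qed
  thus ?thesis by blast
qed

lemma disagree:
  assumes t: "t \<in> Idx" and len: "length y = n" and ny: "\<not> inQ y t"
  obtains j where "j \<in> Ps (fst t) (snd t) \<union> Zs (fst t) (snd t)" "j < n"
    "\<And>z. length z = n \<Longrightarrow> inQ z t \<Longrightarrow> z ! j \<noteq> y ! j"
proof -
  obtain g r where tt: "t = (g, r)" by force
  from ny obtain j where j: "(j \<in> Ps g r \<and> \<not> y ! j) \<or> (j \<in> Zs g r \<and> y ! j)"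
    unfolding inQ_def tt by auto
  hence "j \<in> Ps g r \<union> Zs g r" by auto
  moreover have "j < n" using coords_lt[of g r j] t tt calculation by simp
  moreover have "z ! j \<noteq> y ! j" if "inQ z t" for z
    using that j PZ_disj[of g r] t tt unfolding inQ_def by auto
  ultimately show ?thesis using that tt by auto
qed

lemma same_cube:
  assumes t: "t \<in> Idx" and len: "length y = n" and ny: "\<not> inQ y t"
    and i: "i < n" and i': "i' < n"
    and h1: "inQ (flip {i} y) t" and h2: "inQ (flip {i'} y) t"
  shows "i = i'"
proof -
  obtain j where j: "j < n" "\<And>z. length z = n \<Longrightarrow> inQ z t \<Longrightarrow> z ! j \<noteq> y ! j"
    using disagree[OF t len ny] by blast
  have "flip {i} y ! j \<noteq> y ! j" using j(2)[OF _ h1] len by simp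
  hence "j = i" using j(1) len by (auto split: if_splits)
  moreover have "flip {i'} y ! j \<noteq> y ! j" using j(2)[OF _ h2] len by simp
  hence "j = i'" using j(1) len by (auto split: if_splits)
  ultimately show ?thesis by simp
qed

lemma conflict_coord:
  assumes len: "length y = n" and "j < n"
    and h1: "inQ (flip {i} y) (g, r)" and h2: "inQ (flip {i'} y) (g', r')"
    and j: "(j \<in> Ps g r \<and> j \<in> Zs g' r') \<or> (j \<in> Zs g r \<and> j \<in> Ps g' r')"
  shows "j = i \<or> j = i'"
proof (rule ccontr)
  assume "\<not> (j = i \<or> j = i')"
  hence "flip {i} y ! j = y ! j" "flip {i'} y ! j = y ! j" using assms by auto
  thus False using h1 h2 j unfolding inQ_def by auto
qed

lemma diff_cube:
  assumes t: "(g, r) \<in> Idx" and t': "(g, r') \<in> Idx" and rr: "r \<noteq> r'" and len: "length y = n"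
    and h1: "inQ (flip {i} y) (g, r)" and h2: "inQ (flip {i'} y) (g, r')"
  shows False
proof -
  have r: "r < b g" and r': "r' < b g" using t t' by (auto simp: Idx_def)
  have j1: "pv g r \<in> Ps g r \<and> pv g r \<in> Zs g r'" using r rr by (auto simp: Ps_def Zs_def)
  have j2: "pv g r' \<in> Zs g r \<and> pv g r' \<in> Ps g r'" using r' rr by (auto simp: Ps_def Zs_def)
  obtain q where j3: "(q \<in> Ps g r \<and> q \<in> Zs g r') \<or> (q \<in> Zs g r \<and> q \<in> Ps g r')"
    and qodd: "q = Suc (pv g r) \<or> q = Suc (pv g r')"
  proof (cases "(r + b g - r') mod b g \<in> {1..b g div 2}")
    case True
    hence "Suc (pv g r) \<in> Zs g r'" using r rr unfolding Zs_def by blast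
    thus ?thesis using that[of "Suc (pv g r)"] by (simp add: Ps_def)
  next
    case False
    hence "(r' + b g - r) mod b g \<in> {1..b g div 2}" using modtour[OF r r' rr] by blast
    hence "Suc (pv g r') \<in> Zs g r" using r' rr unfolding Zs_def by blast
    thus ?thesis using that[of "Suc (pv g r')"] by (simp add: Ps_def)
  qed
  have n1: "pv g r < n" "pv g r' < n" "q < n"
    using coords_lt[OF t] coords_lt[OF t'] j1 j2 j3 by blast+
  have d1: "pv g r \<noteq> pv g r'" using pv_inj[of r r' g g] r r' b_le[of g] rr by auto
  have d2: "q \<noteq> pv g r" "q \<noteq> pv g r'" using qodd pv_Suc_ne by metis+
  have "pv g r = i \<or> pv g r = i'" by (rule conflict_coord[OF len n1(1) h1 h2]) (use j1 in blast)
  moreover have "pv g r' = i \<or> pv g r' = i'" by (rule conflict_coord[OF len n1(2) h1 h2]) (use j2 in blast)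
  moreover have "q = i \<or> q = i'" by (rule conflict_coord[OF len n1(3) h1 h2]) (use j3 in blast)
  ultimately show False using d1 d2 by auto
qed

lemma sens_le:
  assumes len: "length y = n" and ny: "\<not> G y"
  shows "sens G y \<le> m"
proof -
  define A where "A = {i. i < length y \<and> G (flip {i} y) \<noteq> G y}"
  define tf where "tf i = (SOME t. t \<in> Idx \<and> inQ (flip {i} y) t)" for i
  have tf: "tf i \<in> Idx \<and> inQ (flip {i} y) (tf i)" if "i \<in> A" for i
  proof -
    have "G (flip {i} y)" using that ny by (simp add: A_def)
    then obtain t where "t \<in> Idx \<and> inQ (flip {i} y) t" by (auto simp: G_def)
    thus ?thesis unfolding tf_def by (rule someI)
  qed
  have nyt: "\<not> inQ y t" if "t \<in> Idx" for t using ny that by (auto simp: G_def)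
  have "inj_on (fst \<circ> tf) A"
  proof (rule inj_onI)
    fix i i' assume i: "i \<in> A" and i': "i' \<in> A" and eq: "(fst \<circ> tf) i = (fst \<circ> tf) i'"
    obtain g r where gr: "tf i = (g, r)" by force
    obtain g' r' where gr': "tf i' = (g', r')" by force
    have gg: "g = g'" using eq gr gr' by simp
    have in1: "(g, r) \<in> Idx" "inQ (flip {i} y) (g, r)" using tf[OF i] gr by auto
    have in2: "(g, r') \<in> Idx" "inQ (flip {i'} y) (g, r')" using tf[OF i'] gr' gg by auto
    have "i < n" "i' < n" using i i' len by (auto simp: A_def)
    show "i = i'"
    proof (cases "r = r'")
      case True
      thus ?thesis using same_cube[OF in1(1) len nyt[OF in1(1)] \<open>i < n\<close> \<open>i' < n\<close> in1(2)] in2 by simp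
    next
      case False
      thus ?thesis using diff_cube[OF in1(1) in2(1) False len in1(2) in2(2)] by simp
    qed
  qed
  moreover have "(fst \<circ> tf) ` A \<subseteq> {..<m}" using tf by (force simp: Idx_def)
  ultimately have "card A \<le> card {..<m}" by (metis card_inj_on_le finite_lessThan)
  thus ?thesis by (simp add: sens_def A_def)
qed

lemma sens_wit: "\<exists>y. length y = n \<and> \<not> G y \<and> sens G y = m"
proof -
  define X where "X = {pv g 0 | g. g < m}"
  define y where "y = map (\<lambda>i. i \<in> X) [0..<n]"
  have len: "length y = n" by (simp add: y_def)
  have yi: "i < n \<Longrightarrow> y ! i = (i \<in> X)" for i by (simp add: y_def)
  have oddX: "Suc (pv g r) \<notin> X" for g r
  proof
    assume "Suc (pv g r) \<in> X"
    then obtain g' where "Suc (pv g r) = pv g' 0" by (auto simp: X_def)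
    thus False using pv_Suc_ne[of g' 0 g r] by simp
  qed
  have ny: "\<not> G y"
  proof
    assume "G y"
    then obtain g r where t: "(g, r) \<in> Idx" "inQ y (g, r)" by (auto simp: G_def)
    have "Suc (pv g r) < n" using coords_lt[OF t(1), of "Suc (pv g r)"] by (simp add: Ps_def)
    hence "y ! Suc (pv g r)" using t(2) by (simp add: inQ_def Ps_def)
    thus False using yi oddX \<open>Suc (pv g r) < n\<close> by simp
  qed
  have sub: "(\<lambda>g. Suc (pv g 0)) ` {..<m} \<subseteq> {i. i < length y \<and> G (flip {i} y) \<noteq> G y}"
  proof
    fix i assume "i \<in> (\<lambda>g. Suc (pv g 0)) ` {..<m}"
    then obtain g where g: "g < m" and i: "i = Suc (pv g 0)" by auto
    have t: "(g, 0) \<in> Idx" using b_pos[OF g] g by (simp add: Idx_def)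
    have iin: "i < n" using coords_lt[OF t, of i] i by (simp add: Ps_def)
    have "inQ (flip {i} y) (g, 0)" unfolding inQ_def
    proof (intro conjI ballI)
      fix j assume j: "j \<in> Ps (fst (g, 0)) (snd (g, 0))"
      hence "j < n" using coords_lt[OF t] by auto
      have "j = pv g 0 \<or> j = i" using j i by (simp add: Ps_def)
      thus "flip {i} y ! j"
      proof
        assume "j = pv g 0"
        moreover have "pv g 0 \<noteq> i" using i pv_Suc_ne by simp
        ultimately show ?thesis using yi len g \<open>j < n\<close> by (auto simp: X_def)
      next
        assume "j = i"
        thus ?thesis using yi len \<open>j < n\<close> oddX i by simp
      qed
    next
      fix j assume j: "j \<in> Zs (fst (g, 0)) (snd (g, 0))"
      hence jn: "j < n" using coords_lt[OF t] by auto
      from j obtain r' where r': "r' < b g" "r' \<noteq> 0" "j = pv g r' \<or> j = Suc (pv g r')"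
        by (auto simp: Zs_def)
      have "r' < c" using r' b_le[of g] by simp
      have "j \<noteq> i"
      proof
        assume ji: "j = i"
        from r'(3) show False
        proof
          assume "j = pv g r'" thus False using ji i pv_Suc_ne[of g r' g 0] by simp
        next
          assume "j = Suc (pv g r')"
          hence "pv g r' = pv g 0" using ji i by simp
          thus False using pv_inj[of r' 0 g g] \<open>r' < c\<close> c0 r'(2) by simp
        qed
      qed
      moreover have "j \<notin> X"
      proof
        assume "j \<in> X"
        then obtain g' where jg: "j = pv g' 0" by (auto simp: X_def)
        from r'(3) show False
        proof
          assume "j = pv g r'" thus False using jg pv_inj[of r' 0 g g'] \<open>r' < c\<close> c0 r'(2) by simp
        next
          assume "j = Suc (pv g r')" thus False using jg pv_Suc_ne[of g' 0 g r'] by simp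
        qed
      qed
      ultimately show "\<not> flip {i} y ! j" using jn yi len by simp
    qed
    hence "G (flip {i} y)" using t by (auto simp: G_def)
    thus "i \<in> {i. i < length y \<and> G (flip {i} y) \<noteq> G y}" using ny iin len by simp
  qed
  have "inj_on (\<lambda>g. Suc (pv g 0)) {..<m}"
  proof (rule inj_onI)
    fix g g' assume "Suc (pv g 0) = Suc (pv g' 0)"
    thus "g = g'" using pv_inj[of 0 0 g g'] c0 by simp
  qed
  hence cm: "card ((\<lambda>g. Suc (pv g 0)) ` {..<m}) = m" by (simp add: card_image)
  have fin: "finite {i. i < length y \<and> G (flip {i} y) \<noteq> G y}" by simp
  have "m \<le> card {i. i < length y \<and> G (flip {i} y) \<noteq> G y}"
    using card_mono[OF fin sub] cm by simp
  hence "m \<le> sens G y" by (simp add: sens_def)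
  thus ?thesis using sens_le[OF len ny] len ny by (intro exI[of _ y]) auto
qed

lemma s0_eq: "s0 n G = m"
proof -
  obtain y where y: "length y = n" "\<not> G y" "sens G y = m" using sens_wit by blast
  show ?thesis unfolding s0_def
    by (rule cSup_eq_maximum) (use y sens_le in \<open>auto intro!: exI[of _ y]\<close>)
qed

lemma Idx_Sigma: "Idx = Sigma {..<m} (\<lambda>g. {..<b g})" by (auto simp: Idx_def)

lemma finite_Idx: "finite Idx" by (simp add: Idx_Sigma)

lemma card_Idx: "card Idx = e + m * (c - 1)"
proof -
  have "card Idx = (\<Sum>g<m. b g)" by (simp add: Idx_Sigma)
  also have "\<dots> = (\<Sum>g\<in>{..<m} \<inter> {x. x < e}. c) + (\<Sum>g\<in>{..<m} \<inter> - {x. x < e}. c - 1)"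
    unfolding b_def by (rule sum.If_cases) simp
  also have "{..<m} \<inter> {x. x < e} = {..<e}" using em by auto
  also have "{..<m} \<inter> - {x. x < e} = {e..<m}" by auto
  finally have "card Idx = e * c + (m - e) * (c - 1)" by simp
  also have "\<dots> = e + m * (c - 1)"
  proof -
    obtain c' where c': "c = Suc c'" using c0 by (cases c) auto
    obtain d where d: "m = e + d" using em le_Suc_ex by blast
    show ?thesis unfolding c' d by (simp add: algebra_simps)
  qed
  finally show ?thesis .
qed

lemma bset_le:
  assumes len: "length y = n" and ny: "\<not> G y"
    and bbin: "bb \<in> {b. \<exists>B :: nat \<Rightarrow> nat set.
      (\<forall>j<b. B j \<subseteq> {..<length y} \<and> G (flip (B j) y) \<noteq> G y) \<and>
      (\<forall>i<b. \<forall>j<b. i \<noteq> j \<longrightarrow> B i \<inter> B j = {})}"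
  shows "bb \<le> card Idx"
proof -
  from bbin obtain B :: "nat \<Rightarrow> nat set" where
    B1': "\<forall>j<bb. B j \<subseteq> {..<length y} \<and> G (flip (B j) y) \<noteq> G y" and
    B2': "\<forall>i<bb. \<forall>j<bb. i \<noteq> j \<longrightarrow> B i \<inter> B j = {}" by blast
  have B1: "\<And>j. j < bb \<Longrightarrow> B j \<subseteq> {..<length y} \<and> G (flip (B j) y) \<noteq> G y" using B1' by blast
  have B2: "\<And>i j. i < bb \<Longrightarrow> j < bb \<Longrightarrow> i \<noteq> j \<Longrightarrow> B i \<inter> B j = {}" using B2' by blast
  define tf where "tf j = (SOME t. t \<in> Idx \<and> inQ (flip (B j) y) t)" for j
  have tf: "tf j \<in> Idx \<and> inQ (flip (B j) y) (tf j)" if "j < bb" for j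
  proof -
    have "G (flip (B j) y)" using B1[OF that] ny by simp
    then obtain t where "t \<in> Idx \<and> inQ (flip (B j) y) t" by (auto simp: G_def)
    thus ?thesis unfolding tf_def by (rule someI)
  qed
  have "inj_on tf {..<bb}"
  proof (rule inj_onI, rule ccontr)
    fix i j assume i: "i \<in> {..<bb}" and j: "j \<in> {..<bb}" and eq: "tf i = tf j" and ne: "i \<noteq> j"
    have t: "tf i \<in> Idx" using tf i by auto
    have nyt: "\<not> inQ y (tf i)" using ny t by (auto simp: G_def)
    obtain d where d: "d < n" "\<And>z. length z = n \<Longrightarrow> inQ z (tf i) \<Longrightarrow> z ! d \<noteq> y ! d"
      using disagree[OF t len nyt] by blast
    have "flip (B i) y ! d \<noteq> y ! d" using d(2)[of "flip (B i) y"] tf i len by simp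
    hence "d \<in> B i" using d(1) len by (auto split: if_splits)
    moreover have "flip (B j) y ! d \<noteq> y ! d" using d(2)[of "flip (B j) y"] tf j eq len by simp
    hence "d \<in> B j" using d(1) len by (auto split: if_splits)
    ultimately show False using B2[of i j] i j ne by auto
  qed
  moreover have "tf ` {..<bb} \<subseteq> Idx" using tf by auto
  ultimately have "card {..<bb} \<le> card Idx" using finite_Idx by (metis card_inj_on_le)
  thus "bb \<le> card Idx" by simp
qed

lemma bsens_le:
  assumes len: "length y = n" and ny: "\<not> G y"
  shows "bsens G y \<le> card Idx"
  unfolding bsens_def
  by (rule cSup_least) (use bset_le[OF len ny] in auto)

lemma Ps_disj: assumes "(g, r) \<in> Idx" "(g', r') \<in> Idx" "(g, r) \<noteq> (g', r')"
  shows "Ps g r \<inter> Ps g' r' = {}"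
proof -
  have "r < c" "r' < c" using assms b_le[of g] b_le[of g'] by (auto simp: Idx_def)
  hence "pv g r \<noteq> pv g' r'" using pv_inj assms(3) by blast
  thus ?thesis unfolding Ps_def using pv_Suc_ne by auto
qed

lemma bsens_wit: "\<exists>y. length y = n \<and> \<not> G y \<and> bsens G y = card Idx"
proof -
  define y where "y = replicate n False"
  have len: "length y = n" by (simp add: y_def)
  have ny: "\<not> G y"
  proof
    assume "G y"
    then obtain g r where t: "(g, r) \<in> Idx" "inQ y (g, r)" by (auto simp: G_def)
    have "pv g r < n" using coords_lt[OF t(1), of "pv g r"] by (simp add: Ps_def)
    thus False using t(2) by (simp add: inQ_def Ps_def y_def)
  qed
  obtain h where h: "bij_betw h {0..<card Idx} Idx" using ex_bij_betw_nat_finite[OF finite_Idx] by blast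
  define B where "B j = Ps (fst (h j)) (snd (h j))" for j
  have hI: "h j \<in> Idx" if "j < card Idx" for j using h that bij_betwE by fastforce
  have "card Idx \<in> {b. \<exists>B :: nat \<Rightarrow> nat set.
      (\<forall>j<b. B j \<subseteq> {..<length y} \<and> G (flip (B j) y) \<noteq> G y) \<and>
      (\<forall>i<b. \<forall>j<b. i \<noteq> j \<longrightarrow> B i \<inter> B j = {})}"
  proof (intro CollectI exI[of _ B] conjI allI impI)
    fix j assume j: "j < card Idx"
    obtain g r where gr: "h j = (g, r)" by force
    have t: "(g, r) \<in> Idx" using hI[OF j] gr by simp
    show "B j \<subseteq> {..<length y}" using coords_lt[OF t] len gr by (auto simp: B_def)
    have "inQ (flip (B j) y) (g, r)" unfolding inQ_def
    proof (intro conjI ballI)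
      fix i assume "i \<in> Ps (fst (g, r)) (snd (g, r))"
      thus "flip (B j) y ! i" using coords_lt[OF t, of i] len gr by (simp add: B_def y_def)
    next
      fix i assume i: "i \<in> Zs (fst (g, r)) (snd (g, r))"
      hence "i \<notin> B j" using PZ_disj[OF t] gr by (auto simp: B_def)
      thus "\<not> flip (B j) y ! i" using coords_lt[OF t, of i] i len by (simp add: y_def)
    qed
    thus "G (flip (B j) y) \<noteq> G y" using ny t by (auto simp: G_def)
  next
    fix i j assume i: "i < card Idx" and j: "j < card Idx" and ne: "i \<noteq> j"
    have "h i \<noteq> h j" using h i j ne by (auto simp: bij_betw_def inj_on_def)
    thus "B i \<inter> B j = {}" using Ps_disj[of "fst (h i)" "snd (h i)" "fst (h j)" "snd (h j)"] hI i j
      by (simp add: B_def prod_eq_iff)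
  qed
  moreover have bdd: "bdd_above {b. \<exists>B :: nat \<Rightarrow> nat set.
      (\<forall>j<b. B j \<subseteq> {..<length y} \<and> G (flip (B j) y) \<noteq> G y) \<and>
      (\<forall>i<b. \<forall>j<b. i \<noteq> j \<longrightarrow> B i \<inter> B j = {})}"
    by (rule bdd_aboveI[where M="card Idx"]) (rule bset_le[OF len ny])
  ultimately have "card Idx \<le> bsens G y" unfolding bsens_def
    by (rule cSup_upper)
  thus ?thesis using bsens_le[OF len ny] len ny by (intro exI[of _ y]) auto
qed

lemma bs0_eq: "bs0 n G = card Idx"
proof -
  obtain y where y: "length y = n" "\<not> G y" "bsens G y = card Idx" using bsens_wit by blast
  show ?thesis unfolding bs0_def
    by (rule cSup_eq_maximum) (use y bsens_le in \<open>auto intro!: exI[of _ y]\<close>)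
qed
lemma card_Zs_le: assumes t: "(g, r) \<in> Idx" shows "card (Zs g r) \<le> (b g - 1) + b g div 2"
proof -
  let ?B = "b g"
  have r: "r < ?B" using t by (simp add: Idx_def)
  have A1: "{pv g r' | r'. r' < ?B \<and> r' \<noteq> r} = pv g ` ({..<?B} - {r})" by auto
  have A2: "{Suc (pv g r') | r'. r' < ?B \<and> r' \<noteq> r \<and> (r' + ?B - r) mod ?B \<in> {1..?B div 2}}
      \<subseteq> (\<lambda>d. Suc (pv g ((r + d) mod ?B))) ` {1..?B div 2}"
  proof
    fix x assume "x \<in> {Suc (pv g r') | r'. r' < ?B \<and> r' \<noteq> r \<and> (r' + ?B - r) mod ?B \<in> {1..?B div 2}}"
    then obtain r' where r': "x = Suc (pv g r')" "r' < ?B" "(r' + ?B - r) mod ?B \<in> {1..?B div 2}" by blast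
    have "(r + (r' + ?B - r) mod ?B) mod ?B = (r + (r' + ?B - r)) mod ?B" by (simp add: mod_add_right_eq)
    also have "r + (r' + ?B - r) = r' + ?B" using r by simp
    also have "(r' + ?B) mod ?B = r'" using r' by simp
    finally show "x \<in> (\<lambda>d. Suc (pv g ((r + d) mod ?B))) ` {1..?B div 2}" using r' by force
  qed
  have "card (Zs g r) \<le> card (pv g ` ({..<?B} - {r})) + card ((\<lambda>d. Suc (pv g ((r + d) mod ?B))) ` {1..?B div 2})"
    unfolding Zs_def A1 by (rule order_trans[OF card_Un_le add_left_mono[OF card_mono[OF _ A2]]]) simp
  also have "\<dots> \<le> card ({..<?B} - {r}) + card {1..?B div 2}"
    by (intro add_mono card_image_le) auto
  also have "\<dots> = (?B - 1) + ?B div 2" using r by simp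
  finally show ?thesis .
qed

definition T :: nat where "T = c + c div 2 + 1"

lemma cert_le: assumes len: "length y = n" and gy: "G y" shows "cert G y \<le> T"
proof -
  obtain g r where t: "(g, r) \<in> Idx" "inQ y (g, r)" using gy by (auto simp: G_def)
  let ?S = "Ps g r \<union> Zs g r"
  have cS: "is_cert G y ?S"
    unfolding is_cert_def
  proof (intro conjI allI impI)
    show "?S \<subseteq> {..<length y}" using coords_lt[OF t(1)] len by auto
  next
    fix z assume z: "length z = length y \<and> (\<forall>i\<in>?S. z ! i = y ! i)"
    hence "inQ z (g, r)" using t(2) by (auto simp: inQ_def)
    thus "G z = G y" using t(1) gy by (auto simp: G_def)
  qed
  have "cert G y \<le> card ?S" unfolding cert_def
    by (rule cInf_lower) (use cS in auto)
  also have "\<dots> \<le> card (Ps g r) + card (Zs g r)" by (rule card_Un_le)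
  also have "\<dots> \<le> 2 + ((b g - 1) + b g div 2)"
    by (intro add_mono card_Zs_le[OF t(1)]) (simp add: Ps_def card_insert_le)
  also have "\<dots> \<le> T"
  proof -
    have "b g \<le> c" by (rule b_le)
    moreover have "0 < b g" using t(1) by (simp add: Idx_def)
    moreover have "b g div 2 \<le> c div 2" using b_le by (rule div_le_mono)
    ultimately show ?thesis unfolding T_def by linarith
  qed
  finally show ?thesis .
qed

lemma b0: "b 0 = c" using e1 by (simp add: b_def)

lemma idx00: "(0, 0) \<in> Idx" using m0 c0 b0 by (simp add: Idx_def)

lemma card_S00: "T \<le> card (Ps 0 0 \<union> Zs 0 0)"
proof -
  have sub: "(\<lambda>r. 2 * r) ` {..<c} \<union> (\<lambda>r. Suc (2 * r)) ` {..c div 2} \<subseteq> Ps 0 0 \<union> Zs 0 0"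
  proof
    fix x assume "x \<in> (\<lambda>r. 2 * r) ` {..<c} \<union> (\<lambda>r. Suc (2 * r)) ` {..c div 2}"
    then consider r where "r < c" "x = 2 * r" | r where "r \<le> c div 2" "x = Suc (2 * r)" by auto
    thus "x \<in> Ps 0 0 \<union> Zs 0 0"
    proof cases
      case 1
      show ?thesis
      proof (cases "r = 0")
        case True thus ?thesis using 1 by (simp add: Ps_def pv_def)
      next
        case False
        hence "x \<in> Zs 0 0" using 1 b0 unfolding Zs_def pv_def by auto
        thus ?thesis by simp
      qed
    next
      case 2
      show ?thesis
      proof (cases "r = 0")
        case True thus ?thesis using 2 by (simp add: Ps_def pv_def)
      next
        case False
        have rc: "r < c" using 2 c0 by linarith
        hence "(r + c - 0) mod c = r" by simp
        hence "x \<in> Zs 0 0" using 2 b0 rc False unfolding Zs_def pv_def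
          by (auto intro!: exI[of _ r])
        thus ?thesis by simp
      qed
    qed
  qed
  have two_ne: "2 * a \<noteq> Suc (2 * b')" for a b' :: nat by presburger
  have dj: "(\<lambda>r. 2 * r) ` {..<c} \<inter> (\<lambda>r. Suc (2 * r)) ` {..c div 2} = {}"
    using two_ne by blast
  have c1: "card ((\<lambda>r. 2 * r) ` {..<c}) = c" by (simp add: card_image inj_on_def)
  have c2: "card ((\<lambda>r. Suc (2 * r)) ` {..c div 2}) = c div 2 + 1" by (simp add: card_image inj_on_def)
  have "card ((\<lambda>r. 2 * r) ` {..<c} \<union> (\<lambda>r. Suc (2 * r)) ` {..c div 2}) = c + (c div 2 + 1)"
    using card_Un_disjoint[OF _ _ dj] c1 c2 by simp
  moreover have "finite (Ps 0 0 \<union> Zs 0 0)"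
    by (rule finite_subset[of _ "{..<n}"]) (use coords_lt[OF idx00] in auto)
  ultimately have "c + (c div 2 + 1) \<le> card (Ps 0 0 \<union> Zs 0 0)"
    using card_mono[OF _ sub] by simp
  thus ?thesis by (simp add: T_def)
qed

lemma cert_wit: "\<exists>y. length y = n \<and> G y \<and> cert G y = T"
proof -
  define y where "y = map (\<lambda>i. i \<in> Ps 0 0) [0..<n]"
  have len: "length y = n" by (simp add: y_def)
  have yi: "i < n \<Longrightarrow> y ! i = (i \<in> Ps 0 0)" for i by (simp add: y_def)
  have cl: "i < n" if "i \<in> Ps 0 0 \<union> Zs 0 0" for i using coords_lt[OF idx00] that by blast
  have in00: "inQ y (0, 0)" unfolding inQ_def fst_conv snd_conv
  proof (intro conjI ballI)
    fix i assume i: "i \<in> Ps 0 0"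
    show "y ! i" using yi[OF cl] i by blast
  next
    fix i assume i: "i \<in> Zs 0 0"
    hence "i \<notin> Ps 0 0" using PZ_disj[OF idx00] by blast
    thus "\<not> y ! i" using yi[OF cl] i by blast
  qed
  have gy: "G y" unfolding G_def using idx00 in00 by blast
  have main: "Ps 0 0 \<union> Zs 0 0 \<subseteq> S" if cS: "is_cert G y S" for S
  proof
    fix i assume i: "i \<in> Ps 0 0 \<union> Zs 0 0"
    have iN: "i < n" using cl[OF i] .
    show "i \<in> S"
    proof (rule ccontr)
      assume iS: "i \<notin> S"
      let ?z = "flip {i} y"
      have agree: "\<forall>j\<in>S. ?z ! j = y ! j"
      proof
        fix j assume j: "j \<in> S"
        hence "j < length y" "j \<noteq> i" using cS iS unfolding is_cert_def by auto
        thus "?z ! j = y ! j" by simp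
      qed
      have all: "\<forall>z. length z = length y \<and> (\<forall>i\<in>S. z ! i = y ! i) \<longrightarrow> G z = G y"
        using cS unfolding is_cert_def by blast
      have "length ?z = length y \<and> (\<forall>i\<in>S. ?z ! i = y ! i)" using agree by simp
      hence "G ?z = G y" using all by blast
      hence "G ?z" using gy by simp
      then obtain t0 where "t0 \<in> Idx" "inQ ?z t0" unfolding G_def by blast
      then obtain g r where t: "(g, r) \<in> Idx" "inQ ?z (g, r)" by (cases t0) auto
      have zi: "?z ! i = (\<not> y ! i)" using iN len by simp
      show False
      proof (cases "(g, r) = (0, 0)")
        case True
        hence t2: "inQ ?z (0, 0)" using t(2) by simp
        show False
        proof (cases "i \<in> Ps 0 0")
          case True
          hence "?z ! i" using t2 unfolding inQ_def by simp
          moreover have "y ! i" using yi[OF iN] True by simp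
          ultimately show False using zi by simp
        next
          case False
          hence iz: "i \<in> Zs 0 0" using i by simp
          hence "\<not> ?z ! i" using t2 unfolding inQ_def by simp
          moreover have "\<not> y ! i" using yi[OF iN] False by simp
          ultimately show False using zi by simp
        qed
      next
        case False
        have dj: "Ps g r \<inter> Ps 0 0 = {}" using Ps_disj[OF t(1) idx00 False] .
        have p1: "pv g r \<in> Ps g r" "Suc (pv g r) \<in> Ps g r" by (auto simp: Ps_def)
        have n1: "pv g r < n" "Suc (pv g r) < n" using coords_lt[OF t(1)] p1 by auto
        have z1: "?z ! pv g r" "?z ! Suc (pv g r)" using t(2) p1 unfolding inQ_def by auto
        have y1: "\<not> y ! pv g r" "\<not> y ! Suc (pv g r)" using yi n1 dj p1 by auto
        have "pv g r = i"
        proof (rule ccontr)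
          assume "pv g r \<noteq> i"
          hence "?z ! pv g r = y ! pv g r" using n1 len by simp
          thus False using z1 y1 by simp
        qed
        moreover have "Suc (pv g r) = i"
        proof (rule ccontr)
          assume "Suc (pv g r) \<noteq> i"
          hence "?z ! Suc (pv g r) = y ! Suc (pv g r)" using n1 len by simp
          thus False using z1 y1 by simp
        qed
        ultimately show False by simp
      qed
    qed
  qed
  have fin: "finite S" if "is_cert G y S" for S
  proof (rule finite_subset)
    show "S \<subseteq> {..<length y}" using that unfolding is_cert_def by blast
  qed simp
  have cS0: "is_cert G y (Ps 0 0 \<union> Zs 0 0)"
    unfolding is_cert_def
  proof (intro conjI allI impI)
    show "Ps 0 0 \<union> Zs 0 0 \<subseteq> {..<length y}" using cl len by auto
  next
    fix z assume z: "length z = length y \<and> (\<forall>i\<in>Ps 0 0 \<union> Zs 0 0. z ! i = y ! i)"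
    have "inQ z (0, 0)" using in00 z unfolding inQ_def fst_conv snd_conv by auto
    thus "G z = G y" using idx00 gy unfolding G_def by blast
  qed
  have "T \<le> cert G y" unfolding cert_def
  proof (rule cInf_greatest)
    show "{card S |S. is_cert G y S} \<noteq> {}" using cS0 by blast
  next
    fix x assume "x \<in> {card S |S. is_cert G y S}"
    then obtain S where xS: "x = card S" "is_cert G y S" by blast
    have "card (Ps 0 0 \<union> Zs 0 0) \<le> card S" using card_mono[OF fin[OF xS(2)] main[OF xS(2)]] .
    thus "T \<le> x" using card_S00 xS(1) by linarith
  qed
  moreover have "cert G y \<le> T" using cert_le[OF len gy] .
  ultimately have "cert G y = T" by linarith
  thus ?thesis using len gy by blast
qed

lemma C1_eq: "C1 n G = T"
proof -
  obtain y where y: "length y = n" "G y" "cert G y = T" using cert_wit by blast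
  show ?thesis unfolding C1_def
    by (rule cSup_eq_maximum) (use y cert_le in \<open>auto intro!: exI[of _ y]\<close>)
qed

end

theorem theorem1:
  fixes m k :: nat
  assumes "0 < m" and "m \<le> k"
  shows "\<exists>n. \<exists>g :: bool list \<Rightarrow> bool.
           s0 n g = m \<and> bs0 n g = k \<and>
           int (C1 n g) = \<lfloor>3 * real_of_int \<lceil>real k / real m\<rceil> / 2\<rfloor> + 1"
proof -
  define c where "c = (k + m - 1) div m"
  define rm where "rm = (k + m - 1) mod m"
  have dm: "k + m - 1 = m * c + rm" unfolding c_def rm_def by simp
  have rm: "rm < m" unfolding rm_def using assms by simp
  have up: "k \<le> m * c" using dm rm assms by linarith
  have c0: "0 < c" using up assms by (cases c) auto
  have lo: "m * (c - 1) < k"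
  proof -
    have "m * (c - 1) + m = m * c" using c0 by (cases c) auto
    thus ?thesis using dm assms by linarith
  qed
  define e where "e = k - m * (c - 1)"
  have mc: "m * c = m * (c - 1) + m" using c0 by (cases c) auto
  have e1: "0 < e" unfolding e_def using lo by linarith
  have em: "e \<le> m" unfolding e_def using up mc by linarith
  have ek: "e + m * (c - 1) = k" unfolding e_def using lo by linarith
  have ce: "1 < c \<or> e = m"
  proof (cases "c = 1")
    case True
    hence "e = k" unfolding e_def by simp
    moreover have "k \<le> m" using up True by simp
    ultimately show ?thesis using assms(2) by simp
  next
    case False thus ?thesis using c0 by linarith
  qed
  have mr0: "0 < real m" using assms(1) by simp
  interpret cons m c e by (unfold_locales; fact assms(1) c0 e1 em ce)
  have ceil: "\<lceil>real k / real m\<rceil> = int c"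
  proof (rule ceiling_unique)
    have A1: "real (m * (c - 1)) < real k" using lo by (simp only: of_nat_less_iff)
    have B1: "real (m * (c - 1)) = (real c - 1) * real m" using c0 by (simp add: of_nat_diff)
    have "(real c - 1) * real m < real k" using A1 unfolding B1 .
    hence "real c - 1 < real k / real m" unfolding pos_less_divide_eq[OF mr0] .
    thus "real_of_int (int c) - 1 < real k / real m" by simp
    have "real k \<le> real (m * c)" using up by (simp only: of_nat_le_iff)
    hence "real k \<le> real c * real m" by (simp add: mult.commute)
    hence "real k / real m \<le> real c" unfolding pos_divide_le_eq[OF mr0] .
    thus "real k / real m \<le> real_of_int (int c)" by simp
  qed
  have fl: "\<lfloor>3 * real_of_int \<lceil>real k / real m\<rceil> / 2\<rfloor> = int (c + c div 2)"
  proof -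
    have eq1: "3 * real_of_int (int c) / 2 = real (3 * c) / real (2::nat)" by simp
    have "\<lfloor>3 * real_of_int (int c) / 2\<rfloor> = \<lfloor>real (3 * c) / real (2::nat)\<rfloor>"
      by (rule arg_cong[where f=floor, OF eq1])
    also have "\<dots> = int ((3 * c) div 2)" by (rule floor_divide_of_nat_eq)
    also have "3 * c = c + c * 2" by simp
    also have "(c + c * 2) div 2 = c + c div 2" by (rule div_mult_self1) simp
    finally show ?thesis unfolding ceil .
  qed
  have bk: "bs0 n G = k" by (simp only: bs0_eq card_Idx ek)
  have ck: "int (C1 n G) = \<lfloor>3 * real_of_int \<lceil>real k / real m\<rceil> / 2\<rfloor> + 1"
    unfolding fl C1_eq T_def by (simp only: of_nat_add of_nat_1)
  show ?thesis
    by (rule exI[of _ n], rule exI[of _ G], intro conjI s0_eq bk ck)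
qed

end
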